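(* Assume the Lipschitz gradient assumption, $r_1>L_x$, and $r_2>(\frac{L_y}{r_1-L_x}+2)L_y$. Then for all $x,x'\in\mathcal X$, $y,y'\in\mathcal Y$, $z,z'\in\mathbb R^n$, $v,v'\in\mathbb R^d$: (i) $\|x(y',z,v)-x(y,z,v)\|\le\sigma_1\|y'-y\|$; (ii) $\|x(y,z',v)-x(y,z,v)\|\le\sigma_2\|z-z'\|$; (iii) $\|x(z',v)-x(z,v)\|\le\sigma_2\|z-z'\|$; (iv) $\|y(z,v)-y(z',v)\|\le\sigma_3\|z-z'\|$; (v) $\|y(x,z,v)-y(x',z,v)\|\le\sigma_4\|x-x'\|$; (vi) $\|y(x,z,v)-y(x,z,v')\|\le\sigma_5\|v-v'\|$; (vii) $\|y(z,v)-y(z,v')\|\le\sigma_5\|v-v'\|$, where $\sigma_1=\frac{L_y+r_1-L_x}{r_1-L_x}$, $\sigma_2=\frac{r_1}{r_1-L_x}$, $\sigma_3=\frac{r_1\sigma_1}{r_2-L_y}+\frac{\sigma_2}{\sigma_1}$, $\sigma_4=\frac{L_x+r_2-L_y}{r_2-L_y}$, $\sigma_5=\frac{r_2}{r_2-L_y}$.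
   Context: Let $\mathcal X\subset\mathbb R^n$, $\mathcal Y\subset\mathbb R^d$ be nonempty convex compact sets and $f:\mathbb R^n\times\mathbb R^d\to\mathbb R$ continuously differentiable. Lipschitz gradient assumption: there are $L_x,L_y>0$ such that for all $x,x'\in\mathcal X$, $y,y'\in\mathcal Y$, $\|\nabla_x f(x,y)-\nabla_x f(x',y')\|\le L_x(\|x-x'\|+\|y-y'\|)$ and $\|\nabla_y f(x,y)-\nabla_y f(x',y')\|\le L_y(\|x-x'\|+\|y-y'\|)$. $F(x,y,z,v)=f(x,y)+\frac{r_1}{2}\|x-z\|^2-\frac{r_2}{2}\|y-v\|^2$. For $z\in\mathbb R^n$, $v\in\mathbb R^d$: $d(y,z,v)=\min_{x\in\mathcal X}F(x,y,z,v)$ with unique minimizer $x(y,z,v)$; $h(x,z,v)=\max_{y\in\mathcal Y}F(x,y,z,v)$ with unique maximizer $y(x,z,v)$; $x(z,v)=\arg\min_{x\in\mathcal X}h(x,z,v)$; $y(z,v)=\arg\max_{y\in\mathcal Y}d(y,z,v)$. *)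

theory Defs
  imports "HOL-Analysis.Analysis"
begin

definition Fpx :: "('n::euclidean_space \<Rightarrow> 'd::euclidean_space \<Rightarrow> real) \<Rightarrow> real \<Rightarrow> real
    \<Rightarrow> 'n \<Rightarrow> 'd \<Rightarrow> 'n \<Rightarrow> 'd \<Rightarrow> real" where
  "Fpx f r1 r2 x y z v = f x y + r1 / 2 * (norm (x - z))^2 - r2 / 2 * (norm (y - v))^2"

definition dfun :: "'n::euclidean_space set \<Rightarrow> ('n \<Rightarrow> 'd::euclidean_space \<Rightarrow> real) \<Rightarrow> real \<Rightarrow> real
    \<Rightarrow> 'd \<Rightarrow> 'n \<Rightarrow> 'd \<Rightarrow> real" where
  "dfun X f r1 r2 y z v = Inf ((\<lambda>x. Fpx f r1 r2 x y z v) ` X)"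

definition hfun :: "'d::euclidean_space set \<Rightarrow> ('n::euclidean_space \<Rightarrow> 'd \<Rightarrow> real) \<Rightarrow> real \<Rightarrow> real
    \<Rightarrow> 'n \<Rightarrow> 'n \<Rightarrow> 'd \<Rightarrow> real" where
  "hfun Y f r1 r2 x z v = Sup ((\<lambda>y. Fpx f r1 r2 x y z v) ` Y)"

definition xyzv :: "'n::euclidean_space set \<Rightarrow> ('n \<Rightarrow> 'd::euclidean_space \<Rightarrow> real) \<Rightarrow> real \<Rightarrow> real
    \<Rightarrow> 'd \<Rightarrow> 'n \<Rightarrow> 'd \<Rightarrow> 'n" where
  "xyzv X f r1 r2 y z v =
     (THE x. x \<in> X \<and> (\<forall>x'\<in>X. Fpx f r1 r2 x y z v \<le> Fpx f r1 r2 x' y z v))"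

definition yxzv :: "'d::euclidean_space set \<Rightarrow> ('n::euclidean_space \<Rightarrow> 'd \<Rightarrow> real) \<Rightarrow> real \<Rightarrow> real
    \<Rightarrow> 'n \<Rightarrow> 'n \<Rightarrow> 'd \<Rightarrow> 'd" where
  "yxzv Y f r1 r2 x z v =
     (THE y. y \<in> Y \<and> (\<forall>y'\<in>Y. Fpx f r1 r2 x y' z v \<le> Fpx f r1 r2 x y z v))"

definition xzv :: "'n::euclidean_space set \<Rightarrow> 'd::euclidean_space set \<Rightarrow> ('n \<Rightarrow> 'd \<Rightarrow> real)
    \<Rightarrow> real \<Rightarrow> real \<Rightarrow> 'n \<Rightarrow> 'd \<Rightarrow> 'n" where
  "xzv X Y f r1 r2 z v =
     (THE x. x \<in> X \<and> (\<forall>x'\<in>X. hfun Y f r1 r2 x z v \<le> hfun Y f r1 r2 x' z v))"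

definition yzv :: "'n::euclidean_space set \<Rightarrow> 'd::euclidean_space set \<Rightarrow> ('n \<Rightarrow> 'd \<Rightarrow> real)
    \<Rightarrow> real \<Rightarrow> real \<Rightarrow> 'n \<Rightarrow> 'd \<Rightarrow> 'd" where
  "yzv X Y f r1 r2 z v =
     (THE y. y \<in> Y \<and> (\<forall>y'\<in>Y. dfun X f r1 r2 y' z v \<le> dfun X f r1 r2 y z v))"

end

theory Submission
  imports Defs
begin

definition SC :: "real \<Rightarrow> 'a::real_inner set \<Rightarrow> ('a \<Rightarrow> real) \<Rightarrow> bool" where
  "SC \<mu> K \<psi> \<longleftrightarrow> (\<forall>a\<in>K. \<forall>b\<in>K. \<forall>t. 0 \<le> t \<and> t \<le> 1 \<longrightarrow>
     \<psi> ((1 - t) *\<^sub>R a + t *\<^sub>R b) \<le> (1 - t) * \<psi> a + t * \<psi> b - \<mu> / 2 * t * (1 - t) * (norm (a - b))\<^sup>2)"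

lemma semiconv_real:
  fixes \<phi> \<phi>' :: "real \<Rightarrow> real"
  assumes d: "\<And>t. (\<phi> has_real_derivative \<phi>' t) (at t)"
    and m: "\<And>s t. 0 \<le> s \<Longrightarrow> s \<le> t \<Longrightarrow> t \<le> 1 \<Longrightarrow> \<phi>' s - \<phi>' t \<le> L * (t - s)"
    and t: "0 \<le> t" "t \<le> 1"
  shows "\<phi> t \<le> (1 - t) * \<phi> 0 + t * \<phi> 1 + L / 2 * t * (1 - t)"
proof -
  have "convex_on {0..1} (\<lambda>s. \<phi> s + L / 2 * s\<^sup>2)"
  proof (rule convex_on_realI[where f'="\<lambda>s. \<phi>' s + L * s"])
    show "connected {0..1::real}" by simp
    show "((\<lambda>s. \<phi> s + L / 2 * s\<^sup>2) has_real_derivative \<phi>' x + L * x) (at x)" for x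
      using d[of x] by (auto intro!: derivative_eq_intros)
    show "\<phi>' x + L * x \<le> \<phi>' y + L * y" if "x \<in> {0..1}" "y \<in> {0..1}" "x \<le> y" for x y
      using m[of x y] that by (auto simp: algebra_simps)
  qed
  from convex_onD[OF this, of t 0 1] t
  have "\<phi> t + L / 2 * t\<^sup>2 \<le> (1 - t) * (\<phi> 0 + L / 2 * 0\<^sup>2) + t * (\<phi> 1 + L / 2 * 1\<^sup>2)" by simp
  then show ?thesis by (simp add: power2_eq_square field_simps)
qed

lemma SC_from_grad:
  fixes \<phi> :: "'a::real_inner \<Rightarrow> real"
  assumes K: "convex K"
    and d: "\<And>a e t. ((\<lambda>t. \<phi> (a + t *\<^sub>R e)) has_real_derivative (G (a + t *\<^sub>R e) \<bullet> e)) (at t)"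
    and m: "\<And>a b. a \<in> K \<Longrightarrow> b \<in> K \<Longrightarrow> (G a - G b) \<bullet> (a - b) \<ge> - L * (norm (a - b))\<^sup>2"
  shows "SC (- L) K \<phi>"
  unfolding SC_def
proof (intro ballI allI impI)
  fix a b and t :: real assume ab: "a \<in> K" "b \<in> K" and t: "0 \<le> t \<and> t \<le> 1"
  define e where "e = b - a"
  have w: "a + s *\<^sub>R e \<in> K" if "0 \<le> s" "s \<le> 1" for s
  proof -
    have "a + s *\<^sub>R e = (1 - s) *\<^sub>R a + s *\<^sub>R b" by (simp add: e_def algebra_simps)
    then show ?thesis using K ab that by (simp add: convex_def)
  qed
  have "\<phi> (a + t *\<^sub>R e) \<le> (1 - t) * \<phi> (a + 0 *\<^sub>R e) + t * \<phi> (a + 1 *\<^sub>R e) + (L * (norm e)\<^sup>2) / 2 * t * (1 - t)"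
  proof (rule semiconv_real[where \<phi>="\<lambda>t. \<phi> (a + t *\<^sub>R e)"])
    show "((\<lambda>t. \<phi> (a + t *\<^sub>R e)) has_real_derivative (G (a + s *\<^sub>R e) \<bullet> e)) (at s)" for s
      by (rule d)
    show "G (a + s *\<^sub>R e) \<bullet> e - G (a + u *\<^sub>R e) \<bullet> e \<le> L * (norm e)\<^sup>2 * (u - s)"
      if "0 \<le> s" "s \<le> u" "u \<le> 1" for s u
    proof (cases "s = u")
      case False
      then have su: "u - s > 0" using that by simp
      have "(G (a + u *\<^sub>R e) - G (a + s *\<^sub>R e)) \<bullet> ((a + u *\<^sub>R e) - (a + s *\<^sub>R e)) \<ge> - L * (norm ((a + u *\<^sub>R e) - (a + s *\<^sub>R e)))\<^sup>2"
        using m[of "a + u *\<^sub>R e" "a + s *\<^sub>R e"] w[of u] w[of s] that by linarith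
      moreover have "(a + u *\<^sub>R e) - (a + s *\<^sub>R e) = (u - s) *\<^sub>R e" by (simp add: algebra_simps)
      ultimately have "(G (a + u *\<^sub>R e) - G (a + s *\<^sub>R e)) \<bullet> ((u - s) *\<^sub>R e) \<ge> - L * (norm ((u - s) *\<^sub>R e))\<^sup>2"
        by simp
      then have "(u - s) * ((G (a + u *\<^sub>R e) - G (a + s *\<^sub>R e)) \<bullet> e) \<ge> - L * ((u - s)\<^sup>2 * (norm e)\<^sup>2)"
        using su by (simp add: power_mult_distrib)
      then have "(u - s) * ((G (a + u *\<^sub>R e) - G (a + s *\<^sub>R e)) \<bullet> e) \<ge> (u - s) * (- L * (u - s) * (norm e)\<^sup>2)"
        by (simp add: power2_eq_square algebra_simps)
      then have "(G (a + u *\<^sub>R e) - G (a + s *\<^sub>R e)) \<bullet> e \<ge> - L * (u - s) * (norm e)\<^sup>2"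
        using mult_left_le_imp_le[OF _ su] by blast
      then show ?thesis by (simp add: algebra_simps inner_diff_left)
    qed simp
  qed (use t in auto)
  moreover have "a + t *\<^sub>R e = (1 - t) *\<^sub>R a + t *\<^sub>R b" by (simp add: e_def algebra_simps)
  ultimately show "\<phi> ((1 - t) *\<^sub>R a + t *\<^sub>R b) \<le> (1 - t) * \<phi> a + t * \<phi> b - - L / 2 * t * (1 - t) * (norm (a - b))\<^sup>2"
    by (simp add: e_def norm_minus_commute mult_ac)
qed

lemma quad_id0:
  fixes A B :: "'a::real_inner"
  shows "(norm ((1 - t) *\<^sub>R A + t *\<^sub>R B))\<^sup>2 =
    (1 - t) * (norm A)\<^sup>2 + t * (norm B)\<^sup>2 - t * (1 - t) * (norm (A - B))\<^sup>2"
  unfolding power2_norm_eq_inner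
  by (simp add: inner_add_left inner_add_right inner_diff_left inner_diff_right inner_commute[of B A] algebra_simps)

lemma quad_id:
  fixes a b z :: "'a::real_inner"
  shows "(norm ((1 - t) *\<^sub>R a + t *\<^sub>R b - z))\<^sup>2 =
    (1 - t) * (norm (a - z))\<^sup>2 + t * (norm (b - z))\<^sup>2 - t * (1 - t) * (norm (a - b))\<^sup>2"
proof -
  have e: "(1 - t) *\<^sub>R a + t *\<^sub>R b - z = (1 - t) *\<^sub>R (a - z) + t *\<^sub>R (b - z)"
    by (simp add: algebra_simps)
  have e2: "a - b = (a - z) - (b - z)" by simp
  show ?thesis unfolding e by (subst e2) (rule quad_id0)
qed

lemma aux_quad: "c / 2 * ((1 - t) * A + t * B - t * (1 - t) * C)
       \<le> (1 - t) * (c / 2 * A) + t * (c / 2 * B) - c / 2 * t * (1 - t) * (C::real)"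
  by (rule eq_refl) (simp add: field_simps)

lemma SC_quad: "SC c K (\<lambda>x. c / 2 * (norm (x - z))\<^sup>2)"
  unfolding SC_def
proof (intro ballI allI impI)
  fix a b and t :: real
  show "c / 2 * (norm ((1 - t) *\<^sub>R a + t *\<^sub>R b - z))\<^sup>2
       \<le> (1 - t) * (c / 2 * (norm (a - z))\<^sup>2) + t * (c / 2 * (norm (b - z))\<^sup>2) - c / 2 * t * (1 - t) * (norm (a - b))\<^sup>2"
    unfolding quad_id by (rule aux_quad)
qed

lemma SC_add: "SC \<mu>1 K f1 \<Longrightarrow> SC \<mu>2 K f2 \<Longrightarrow> SC (\<mu>1 + \<mu>2) K (\<lambda>x. f1 x + f2 x)"
  unfolding SC_def
proof (intro ballI allI impI)
  fix a b and t :: real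
  assume h: "\<forall>a\<in>K. \<forall>b\<in>K. \<forall>t. 0 \<le> t \<and> t \<le> 1 \<longrightarrow> f1 ((1 - t) *\<^sub>R a + t *\<^sub>R b) \<le> (1 - t) * f1 a + t * f1 b - \<mu>1 / 2 * t * (1 - t) * (norm (a - b))\<^sup>2"
     "\<forall>a\<in>K. \<forall>b\<in>K. \<forall>t. 0 \<le> t \<and> t \<le> 1 \<longrightarrow> f2 ((1 - t) *\<^sub>R a + t *\<^sub>R b) \<le> (1 - t) * f2 a + t * f2 b - \<mu>2 / 2 * t * (1 - t) * (norm (a - b))\<^sup>2"
    and ab: "a \<in> K" "b \<in> K" "0 \<le> t \<and> t \<le> 1"
  from h(1)[rule_format, OF ab] h(2)[rule_format, OF ab]
  show "f1 ((1 - t) *\<^sub>R a + t *\<^sub>R b) + f2 ((1 - t) *\<^sub>R a + t *\<^sub>R b)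
       \<le> (1 - t) * (f1 a + f2 a) + t * (f1 b + f2 b) - (\<mu>1 + \<mu>2) / 2 * t * (1 - t) * (norm (a - b))\<^sup>2"
    by (simp add: algebra_simps add_divide_distrib)
qed

lemma SC_const: "SC \<mu> K f \<Longrightarrow> SC \<mu> K (\<lambda>x. f x + c)"
  unfolding SC_def by (auto simp: algebra_simps)

lemma SC_cong: "SC \<mu> K f \<Longrightarrow> (\<And>x. x \<in> K \<Longrightarrow> f x = g x) \<Longrightarrow> convex K \<Longrightarrow> SC \<mu> K g"
  unfolding SC_def convex_def
proof (intro ballI allI impI)
  fix a b and t :: real
  assume h: "\<forall>a\<in>K. \<forall>b\<in>K. \<forall>t. 0 \<le> t \<and> t \<le> 1 \<longrightarrow> f ((1 - t) *\<^sub>R a + t *\<^sub>R b) \<le> (1 - t) * f a + t * f b - \<mu> / 2 * t * (1 - t) * (norm (a - b))\<^sup>2"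
    and e: "\<And>x. x \<in> K \<Longrightarrow> f x = g x"
    and K: "\<forall>x\<in>K. \<forall>y\<in>K. \<forall>u\<ge>0. \<forall>v\<ge>0. u + v = 1 \<longrightarrow> u *\<^sub>R x + v *\<^sub>R y \<in> K"
    and ab: "a \<in> K" "b \<in> K" "0 \<le> t \<and> t \<le> 1"
  have "(1 - t) *\<^sub>R a + t *\<^sub>R b \<in> K" using K ab by auto
  then show "g ((1 - t) *\<^sub>R a + t *\<^sub>R b) \<le> (1 - t) * g a + t * g b - \<mu> / 2 * t * (1 - t) * (norm (a - b))\<^sup>2"
    using h[rule_format, OF ab] e ab by simp
qed

lemma SC_mono: "SC \<mu> K f \<Longrightarrow> \<mu>' \<le> \<mu> \<Longrightarrow> SC \<mu>' K f"
  unfolding SC_def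
proof (intro ballI allI impI)
  fix a b and t :: real
  assume h: "\<forall>a\<in>K. \<forall>b\<in>K. \<forall>t. 0 \<le> t \<and> t \<le> 1 \<longrightarrow> f ((1 - t) *\<^sub>R a + t *\<^sub>R b) \<le> (1 - t) * f a + t * f b - \<mu> / 2 * t * (1 - t) * (norm (a - b))\<^sup>2"
    and m: "\<mu>' \<le> \<mu>" and ab: "a \<in> K" "b \<in> K" "0 \<le> t \<and> t \<le> 1"
  have "\<mu>' / 2 * (t * (1 - t) * (norm (a - b))\<^sup>2) \<le> \<mu> / 2 * (t * (1 - t) * (norm (a - b))\<^sup>2)"
    using ab m by (intro mult_right_mono) auto
  with h[rule_format, OF ab] show "f ((1 - t) *\<^sub>R a + t *\<^sub>R b) \<le> (1 - t) * f a + t * f b - \<mu>' / 2 * t * (1 - t) * (norm (a - b))\<^sup>2"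
    by (simp add: mult_ac)
qed

lemma SC_Sup:
  assumes K: "convex K" and B: "B \<noteq> {}"
    and sc: "\<And>b. b \<in> B \<Longrightarrow> SC \<mu> K (\<lambda>a. G a b)"
    and bd: "\<And>a. a \<in> K \<Longrightarrow> bdd_above ((\<lambda>b. G a b) ` B)"
  shows "SC \<mu> K (\<lambda>a. SUP b\<in>B. G a b)"
  unfolding SC_def
proof (intro ballI allI impI)
  fix a c and t :: real assume ac: "a \<in> K" "c \<in> K" and t: "0 \<le> t \<and> t \<le> 1"
  have w: "(1 - t) *\<^sub>R a + t *\<^sub>R c \<in> K" using K ac t by (simp add: convex_def)
  show "(SUP b\<in>B. G ((1 - t) *\<^sub>R a + t *\<^sub>R c) b) \<le> (1 - t) * (SUP b\<in>B. G a b) + t * (SUP b\<in>B. G c b) - \<mu> / 2 * t * (1 - t) * (norm (a - c))\<^sup>2"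
  proof (rule cSUP_least[OF B])
    fix b assume b: "b \<in> B"
    have "G ((1 - t) *\<^sub>R a + t *\<^sub>R c) b \<le> (1 - t) * G a b + t * G c b - \<mu> / 2 * t * (1 - t) * (norm (a - c))\<^sup>2"
      using sc[OF b] ac t unfolding SC_def by blast
    also have "\<dots> \<le> (1 - t) * (SUP b\<in>B. G a b) + t * (SUP b\<in>B. G c b) - \<mu> / 2 * t * (1 - t) * (norm (a - c))\<^sup>2"
      using t cSUP_upper[OF b bd[OF ac(1)]] cSUP_upper[OF b bd[OF ac(2)]]
      by (intro diff_right_mono add_mono mult_left_mono) auto
    finally show "G ((1 - t) *\<^sub>R a + t *\<^sub>R c) b \<le> \<dots>" .
  qed
qed

lemma INF_neg_SUP: "(INF b\<in>B. G b) = - (SUP b\<in>B. - G b :: real)"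
  by (simp add: Inf_real_def image_image)

lemma SC_growth:
  assumes sc: "SC \<mu> K \<psi>" and K: "convex K" and u: "u1 \<in> K" "u2 \<in> K"
    and mn: "\<forall>u\<in>K. \<psi> u1 \<le> \<psi> u" and \<mu>: "\<mu> \<ge> 0"
  shows "\<psi> u2 \<ge> \<psi> u1 + \<mu> / 2 * (norm (u2 - u1))\<^sup>2"
proof (rule ccontr)
  define c where "c = \<mu> / 2 * (norm (u2 - u1))\<^sup>2"
  define g where "g = \<psi> u2 - \<psi> u1"
  have key: "g \<ge> c * (1 - t)" if t: "0 < t" "t \<le> 1" for t
  proof -
    have "\<psi> u1 \<le> \<psi> ((1 - t) *\<^sub>R u1 + t *\<^sub>R u2)"
      using mn K u t by (simp add: convex_def)
    also have "\<dots> \<le> (1 - t) * \<psi> u1 + t * \<psi> u2 - \<mu> / 2 * t * (1 - t) * (norm (u1 - u2))\<^sup>2"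
      using sc u t unfolding SC_def by auto
    finally have "t * (c * (1 - t)) \<le> t * g"
      by (simp add: c_def g_def algebra_simps norm_minus_commute)
    then show ?thesis using t by simp
  qed
  assume "\<not> ?thesis"
  then have gc: "g < c" by (simp add: c_def g_def)
  have g0: "g \<ge> 0" using key[of 1] by simp
  then have cpos: "c > 0" using gc by simp
  define t where "t = (c - g) / (2 * c)"
  have t: "0 < t" "t \<le> 1" using gc g0 cpos by (auto simp: t_def field_simps)
  have e: "c * (1 - t) = (c + g) / 2" using cpos by (simp add: t_def field_simps)
  have "(c + g) / 2 \<le> g" using key[OF t] e by simp
  then show False using gc by simp
qed

lemma argmin_THE:
  assumes K: "compact K" "K \<noteq> {}" "convex K" and c: "continuous_on K \<psi>"
    and sc: "SC \<mu> K \<psi>" and \<mu>: "\<mu> > 0"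
  shows "(THE u. u \<in> K \<and> (\<forall>u'\<in>K. \<psi> u \<le> \<psi> u')) \<in> K \<and>
         (\<forall>u'\<in>K. \<psi> (THE u. u \<in> K \<and> (\<forall>u'\<in>K. \<psi> u \<le> \<psi> u')) \<le> \<psi> u')"
proof -
  obtain u where u: "u \<in> K" "\<forall>u'\<in>K. \<psi> u \<le> \<psi> u'"
    using continuous_attains_inf[OF K(1,2) c] by blast
  have uniq: "w = u" if w: "w \<in> K \<and> (\<forall>u'\<in>K. \<psi> w \<le> \<psi> u')" for w
  proof -
    have "\<psi> w \<ge> \<psi> u + \<mu> / 2 * (norm (w - u))\<^sup>2"
      using SC_growth[OF sc K(3) u(1) conjunct1[OF w] u(2)] \<mu> by linarith
    moreover have "\<psi> u \<ge> \<psi> w" using w u(1) by blast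
    ultimately have "\<mu> / 2 * (norm (w - u))\<^sup>2 \<le> 0" by simp
    then have "(norm (w - u))\<^sup>2 \<le> 0" using \<mu>
      by (simp add: mult_le_0_iff)
    then show ?thesis by simp
  qed
  have "(THE u. u \<in> K \<and> (\<forall>u'\<in>K. \<psi> u \<le> \<psi> u')) = u"
  proof (rule the_equality)
    show "u \<in> K \<and> (\<forall>u'\<in>K. \<psi> u \<le> \<psi> u')" using u by blast
  next
    fix w assume "w \<in> K \<and> (\<forall>u'\<in>K. \<psi> w \<le> \<psi> u')"
    then show "w = u" by (rule uniq)
  qed
  then show ?thesis using u by simp
qed


lemma bdd_slice:
  fixes G :: "'a::metric_space \<Rightarrow> 'b::metric_space \<Rightarrow> real"
  assumes B: "compact B" and c: "continuous_on (K \<times> B) (\<lambda>p. G (fst p) (snd p))" and a: "a \<in> K"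
  shows "bdd_above ((\<lambda>b. G a b) ` B)" "bdd_below ((\<lambda>b. G a b) ` B)" "continuous_on B (\<lambda>b. G a b)"
proof -
  have "continuous_on B ((\<lambda>p. G (fst p) (snd p)) \<circ> (\<lambda>b. (a, b)))"
    by (rule continuous_on_compose) (auto intro!: continuous_intros continuous_on_subset[OF c] simp: a)
  then show cb: "continuous_on B (\<lambda>b. G a b)" by (simp add: o_def)
  have "compact ((\<lambda>b. G a b) ` B)" by (rule compact_continuous_image[OF cb B])
  then have "bounded ((\<lambda>b. G a b) ` B)" by (rule compact_imp_bounded)
  then show "bdd_above ((\<lambda>b. G a b) ` B)" "bdd_below ((\<lambda>b. G a b) ` B)"
    by (auto intro: bounded_imp_bdd_above bounded_imp_bdd_below)
qed

lemma cont_Sup: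
  fixes G :: "'a::metric_space \<Rightarrow> 'b::metric_space \<Rightarrow> real"
  assumes K: "compact K" and B: "compact B" "B \<noteq> {}"
    and c: "continuous_on (K \<times> B) (\<lambda>p. G (fst p) (snd p))"
  shows "continuous_on K (\<lambda>a. SUP b\<in>B. G a b)"
proof -
  have uc: "uniformly_continuous_on (K \<times> B) (\<lambda>p. G (fst p) (snd p))"
    by (rule compact_uniformly_continuous[OF c compact_Times[OF K B(1)]])
  show ?thesis unfolding continuous_on_iff
  proof (intro ballI allI impI)
    fix x and e :: real assume x: "x \<in> K" and e: "e > 0"
    obtain d where d: "d > 0" and hd: "\<And>p p'. p \<in> K \<times> B \<Longrightarrow> p' \<in> K \<times> B \<Longrightarrow> dist p' p < d \<Longrightarrow>
        dist (G (fst p') (snd p')) (G (fst p) (snd p)) < e / 2"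
      using uc e unfolding uniformly_continuous_on_def by (metis half_gt_zero)
    show "\<exists>d>0. \<forall>x'\<in>K. dist x' x < d \<longrightarrow> dist (SUP b\<in>B. G x' b) (SUP b\<in>B. G x b) < e"
    proof (intro exI[of _ d] conjI ballI impI d)
      fix x' assume x': "x' \<in> K" and dx: "dist x' x < d"
      have close: "\<bar>G x' b - G x b\<bar> < e / 2" if b: "b \<in> B" for b
      proof -
        have "dist (x', b) (x, b) < d" using dx by (simp add: dist_Pair_Pair)
        from hd[of "(x, b)" "(x', b)", OF _ _ this] x x' b show ?thesis by (simp add: dist_real_def)
      qed
      have s1: "(SUP b\<in>B. G x' b) \<le> (SUP b\<in>B. G x b) + e / 2"
      proof (rule cSUP_least[OF B(2)])
        fix b assume b: "b \<in> B"
        have "G x b \<le> (SUP b\<in>B. G x b)" by (rule cSUP_upper[OF b bdd_slice(1)[OF B(1) c x]])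
        then show "G x' b \<le> (SUP b\<in>B. G x b) + e / 2" using close[OF b] by linarith
      qed
      have s2: "(SUP b\<in>B. G x b) \<le> (SUP b\<in>B. G x' b) + e / 2"
      proof (rule cSUP_least[OF B(2)])
        fix b assume b: "b \<in> B"
        have "G x' b \<le> (SUP b\<in>B. G x' b)" by (rule cSUP_upper[OF b bdd_slice(1)[OF B(1) c x']])
        then show "G x b \<le> (SUP b\<in>B. G x' b) + e / 2" using close[OF b] by linarith
      qed
      show "dist (SUP b\<in>B. G x' b) (SUP b\<in>B. G x b) < e"
        using s1 s2 e by (simp add: dist_real_def abs_le_iff)
    qed
  qed
qed


lemma path_deriv:
  fixes f :: "'n::euclidean_space \<Rightarrow> 'd::euclidean_space \<Rightarrow> real"
  assumes deriv: "\<And>a b. ((\<lambda>p. f (fst p) (snd p)) has_derivative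
                   (\<lambda>p. gx a b \<bullet> fst p + gy a b \<bullet> snd p)) (at (a, b))"
  shows "((\<lambda>t. f (p + t *\<^sub>R u) (q + t *\<^sub>R w)) has_real_derivative
     (gx (p + t *\<^sub>R u) (q + t *\<^sub>R w) \<bullet> u + gy (p + t *\<^sub>R u) (q + t *\<^sub>R w) \<bullet> w)) (at t)"
proof -
  have g: "((\<lambda>t. (p + t *\<^sub>R u, q + t *\<^sub>R w)) has_derivative (\<lambda>h. (h *\<^sub>R u, h *\<^sub>R w))) (at t)"
    by (auto intro!: derivative_eq_intros)
  have "((\<lambda>t. (\<lambda>p. f (fst p) (snd p)) (p + t *\<^sub>R u, q + t *\<^sub>R w)) has_derivative
     (\<lambda>h. gx (p + t *\<^sub>R u) (q + t *\<^sub>R w) \<bullet> fst (h *\<^sub>R u, h *\<^sub>R w) + gy (p + t *\<^sub>R u) (q + t *\<^sub>R w) \<bullet> snd (h *\<^sub>R u, h *\<^sub>R w))) (at t)"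
    by (rule has_derivative_compose[OF g deriv])
  moreover have "(\<lambda>h. gx (p + t *\<^sub>R u) (q + t *\<^sub>R w) \<bullet> fst (h *\<^sub>R u, h *\<^sub>R w) + gy (p + t *\<^sub>R u) (q + t *\<^sub>R w) \<bullet> snd (h *\<^sub>R u, h *\<^sub>R w))
     = (*) (gx (p + t *\<^sub>R u) (q + t *\<^sub>R w) \<bullet> u + gy (p + t *\<^sub>R u) (q + t *\<^sub>R w) \<bullet> w)"
    by (auto simp: fun_eq_iff algebra_simps)
  ultimately show ?thesis unfolding has_field_derivative_def by simp
qed

lemma quad4:
  fixes p q z z' :: "'a::real_inner"
  shows "(norm (p - z))\<^sup>2 - (norm (q - z))\<^sup>2 + (norm (q - z'))\<^sup>2 - (norm (p - z'))\<^sup>2 \<le> 2 * (norm (p - q) * norm (z - z'))"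
proof -
  have "(norm (p - z))\<^sup>2 - (norm (q - z))\<^sup>2 + (norm (q - z'))\<^sup>2 - (norm (p - z'))\<^sup>2 = 2 * ((q - p) \<bullet> (z - z'))"
    unfolding power2_norm_eq_inner
    by (simp add: inner_add_left inner_add_right inner_diff_left inner_diff_right inner_commute algebra_simps)
  also have "\<dots> \<le> 2 * (norm (q - p) * norm (z - z'))"
    using Cauchy_Schwarz_ineq2[of "q - p" "z - z'"] by simp
  finally show ?thesis by (simp add: norm_minus_commute)
qed

lemma sq_cancel:
  fixes t \<mu> B :: real
  assumes "t \<ge> 0" "\<mu> * t\<^sup>2 \<le> t * B" "B \<ge> 0"
  shows "\<mu> * t \<le> B"
proof (cases "t = 0")
  case False
  then have "t > 0" using assms by simp
  moreover have "t * (\<mu> * t) \<le> t * B" using assms(2) by (simp add: power2_eq_square mult_ac)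
  ultimately show ?thesis by (rule mult_left_le_imp_le[rotated])
qed (use assms in simp)

locale setting =
  fixes X :: "'n::euclidean_space set" and Y :: "'d::euclidean_space set"
    and f :: "'n \<Rightarrow> 'd \<Rightarrow> real"
    and gx :: "'n \<Rightarrow> 'd \<Rightarrow> 'n" and gy :: "'n \<Rightarrow> 'd \<Rightarrow> 'd"
    and Lx Ly r1 r2 :: real
  assumes X: "X \<noteq> {}" "convex X" "compact X"
    and Y: "Y \<noteq> {}" "convex Y" "compact Y"
    and deriv: "\<And>a b. ((\<lambda>p. f (fst p) (snd p)) has_derivative
                   (\<lambda>p. gx a b \<bullet> fst p + gy a b \<bullet> snd p)) (at (a, b))"
    and Lpos: "Lx > 0" "Ly > 0"
    and Lipx: "\<And>a a' b b'. a \<in> X \<Longrightarrow> a' \<in> X \<Longrightarrow> b \<in> Y \<Longrightarrow> b' \<in> Y \<Longrightarrow>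
                 norm (gx a b - gx a' b') \<le> Lx * (norm (a - a') + norm (b - b'))"
    and Lipy: "\<And>a a' b b'. a \<in> X \<Longrightarrow> a' \<in> X \<Longrightarrow> b \<in> Y \<Longrightarrow> b' \<in> Y \<Longrightarrow>
                 norm (gy a b - gy a' b') \<le> Ly * (norm (a - a') + norm (b - b'))"
    and r1: "r1 > Lx"
    and r2: "r2 > (Ly / (r1 - Lx) + 2) * Ly"
begin

lemma mu1: "r1 - Lx > 0" using r1 by simp

lemma mu2: "r2 - Ly > Ly"
proof -
  have "Ly / (r1 - Lx) > 0" using Lpos mu1 by simp
  then have "(Ly / (r1 - Lx) + 2) * Ly \<ge> 2 * Ly" using Lpos by simp
  then show ?thesis using r2 by simp
qed

lemma fcont: "continuous_on UNIV (\<lambda>p. f (fst p) (snd p))"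
proof (rule continuous_at_imp_continuous_on, intro ballI)
  fix p :: "'n \<times> 'd"
  show "isCont (\<lambda>p. f (fst p) (snd p)) p"
    using has_derivative_continuous[OF deriv[of "fst p" "snd p"]] by simp
qed

lemma Fcont: "continuous_on UNIV (\<lambda>p. Fpx f r1 r2 (fst p) (snd p) z v)"
proof -
  have "continuous_on UNIV (\<lambda>p. f (fst p) (snd p) + r1 / 2 * (norm (fst p - z))\<^sup>2 - r2 / 2 * (norm (snd p - v))\<^sup>2)"
    by (intro continuous_intros fcont)
  then show ?thesis unfolding Fpx_def .
qed

lemma Fcont_swap: "continuous_on UNIV (\<lambda>p. Fpx f r1 r2 (snd p) (fst p) z v)"
proof -
  have "continuous_on UNIV (\<lambda>p. (\<lambda>p. Fpx f r1 r2 (fst p) (snd p) z v) (snd p, fst p))"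
    by (rule continuous_on_compose2[OF Fcont]) (auto intro!: continuous_intros)
  then show ?thesis by simp
qed

lemma dd:
  assumes ab: "a \<in> X" "b \<in> X" and yy: "y \<in> Y" "y' \<in> Y"
  shows "\<bar>f b y - f a y - f b y' + f a y'\<bar> \<le> Ly * norm (b - a) * norm (y - y')"
proof -
  define e where "e = y - y'"
  define ch where "ch t = f b (y' + t *\<^sub>R e) - f a (y' + t *\<^sub>R e)" for t
  define chd where "chd t = gy b (y' + t *\<^sub>R e) \<bullet> e - gy a (y' + t *\<^sub>R e) \<bullet> e" for t
  have d: "(ch has_real_derivative chd t) (at t)" for t
  proof -
    have 1: "((\<lambda>t. f (b + t *\<^sub>R 0) (y' + t *\<^sub>R e)) has_real_derivative
      (gx (b + t *\<^sub>R 0) (y' + t *\<^sub>R e) \<bullet> 0 + gy (b + t *\<^sub>R 0) (y' + t *\<^sub>R e) \<bullet> e)) (at t)"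
      by (rule path_deriv[OF deriv])
    have 2: "((\<lambda>t. f (a + t *\<^sub>R 0) (y' + t *\<^sub>R e)) has_real_derivative
      (gx (a + t *\<^sub>R 0) (y' + t *\<^sub>R e) \<bullet> 0 + gy (a + t *\<^sub>R 0) (y' + t *\<^sub>R e) \<bullet> e)) (at t)"
      by (rule path_deriv[OF deriv])
    show ?thesis using DERIV_diff[OF 1 2] by (simp add: ch_def[abs_def] chd_def)
  qed
  obtain \<xi> where \<xi>: "0 < \<xi>" "\<xi> < 1" and eq: "ch 1 - ch 0 = (1 - 0) * chd \<xi>"
    using MVT2[of 0 1 ch chd] d by auto
  have q: "y' + \<xi> *\<^sub>R e \<in> Y"
  proof -
    have "y' + \<xi> *\<^sub>R e = (1 - \<xi>) *\<^sub>R y' + \<xi> *\<^sub>R y" by (simp add: e_def algebra_simps)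
    then show ?thesis using Y(2) yy \<xi> by (simp add: convex_def)
  qed
  have "\<bar>chd \<xi>\<bar> = \<bar>(gy b (y' + \<xi> *\<^sub>R e) - gy a (y' + \<xi> *\<^sub>R e)) \<bullet> e\<bar>"
    by (simp add: chd_def inner_diff_left)
  also have "\<dots> \<le> norm (gy b (y' + \<xi> *\<^sub>R e) - gy a (y' + \<xi> *\<^sub>R e)) * norm e"
    by (rule Cauchy_Schwarz_ineq2)
  also have "\<dots> \<le> Ly * (norm (b - a) + norm ((y' + \<xi> *\<^sub>R e) - (y' + \<xi> *\<^sub>R e))) * norm e"
    by (intro mult_right_mono Lipy ab yy q) auto
  finally have "\<bar>chd \<xi>\<bar> \<le> Ly * norm (b - a) * norm e" by simp
  moreover have "ch 1 - ch 0 = f b y - f a y - f b y' + f a y'" by (simp add: ch_def e_def)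
  ultimately show ?thesis using eq by (simp add: e_def)
qed

lemma SCx: assumes y: "y \<in> Y" shows "SC (- Lx) X (\<lambda>x. f x y)"
proof (rule SC_from_grad[where G="\<lambda>x. gx x y"])
  show "convex X" by (rule X(2))
  show "((\<lambda>t. f (a + t *\<^sub>R e) y) has_real_derivative gx (a + t *\<^sub>R e) y \<bullet> e) (at t)" for a e t
    using path_deriv[OF deriv, where p=a and u=e and q=y and w=0 and t=t] by simp
  show "- Lx * (norm (a - b))\<^sup>2 \<le> (gx a y - gx b y) \<bullet> (a - b)" if "a \<in> X" "b \<in> X" for a b
  proof -
    have "\<bar>(gx a y - gx b y) \<bullet> (a - b)\<bar> \<le> norm (gx a y - gx b y) * norm (a - b)"
      by (rule Cauchy_Schwarz_ineq2)
    also have "\<dots> \<le> Lx * (norm (a - b) + norm (y - y)) * norm (a - b)"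
      by (intro mult_right_mono Lipx that y) auto
    finally show ?thesis by (simp add: power2_eq_square)
  qed
qed

lemma SCy: assumes x: "x \<in> X" shows "SC (- Ly) Y (\<lambda>y. - f x y)"
proof (rule SC_from_grad[where G="\<lambda>y. - gy x y"])
  show "convex Y" by (rule Y(2))
  show "((\<lambda>t. - f x (a + t *\<^sub>R e)) has_real_derivative - gy x (a + t *\<^sub>R e) \<bullet> e) (at t)" for a e t
    using DERIV_minus[OF path_deriv[OF deriv, where p=x and u=0 and q=a and w=e and t=t]] by simp
  show "- Ly * (norm (a - b))\<^sup>2 \<le> (- gy x a - - gy x b) \<bullet> (a - b)" if "a \<in> Y" "b \<in> Y" for a b
  proof -
    have "\<bar>(gy x a - gy x b) \<bullet> (a - b)\<bar> \<le> norm (gy x a - gy x b) * norm (a - b)"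
      by (rule Cauchy_Schwarz_ineq2)
    also have "\<dots> \<le> Ly * (norm (x - x) + norm (a - b)) * norm (a - b)"
      by (intro mult_right_mono Lipy that x) auto
    finally have "\<bar>(gy x a - gy x b) \<bullet> (a - b)\<bar> \<le> Ly * (norm (a - b))\<^sup>2" by (simp add: power2_eq_square)
    then show ?thesis by (simp add: inner_diff_left)
  qed
qed


lemma SCF: assumes y: "y \<in> Y" shows "SC (r1 - Lx) X (\<lambda>x. Fpx f r1 r2 x y z v)"
proof -
  have "SC (- Lx + r1) X (\<lambda>x. f x y + r1 / 2 * (norm (x - z))\<^sup>2)"
    by (rule SC_add[OF SCx[OF y] SC_quad])
  then have "SC (- Lx + r1) X (\<lambda>x. f x y + r1 / 2 * (norm (x - z))\<^sup>2 + (- (r2 / 2 * (norm (y - v))\<^sup>2)))"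
    by (rule SC_const)
  then show ?thesis unfolding Fpx_def by simp
qed

lemma SCnegF: assumes x: "x \<in> X" shows "SC (r2 - Ly) Y (\<lambda>y. - Fpx f r1 r2 x y z v)"
proof -
  have "SC (- Ly + r2) Y (\<lambda>y. - f x y + r2 / 2 * (norm (y - v))\<^sup>2)"
    by (rule SC_add[OF SCy[OF x] SC_quad])
  then have "SC (- Ly + r2) Y (\<lambda>y. - f x y + r2 / 2 * (norm (y - v))\<^sup>2 + (- (r1 / 2 * (norm (x - z))\<^sup>2)))"
    by (rule SC_const)
  then show ?thesis unfolding Fpx_def by (simp add: algebra_simps)
qed

lemma xmin: assumes y: "y \<in> Y"
  shows "xyzv X f r1 r2 y z v \<in> X \<and> (\<forall>x'\<in>X. Fpx f r1 r2 (xyzv X f r1 r2 y z v) y z v \<le> Fpx f r1 r2 x' y z v)"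
proof -
  have c: "continuous_on X (\<lambda>x. Fpx f r1 r2 x y z v)"
  proof -
    have "continuous_on X (\<lambda>x. (\<lambda>p. Fpx f r1 r2 (fst p) (snd p) z v) (x, y))"
      by (rule continuous_on_compose2[OF Fcont]) (auto intro!: continuous_intros)
    then show ?thesis by simp
  qed
  show ?thesis unfolding xyzv_def
    by (rule argmin_THE[OF X(3,1,2) c SCF[OF y] mu1])
qed

lemma ymax: assumes x: "x \<in> X"
  shows "yxzv Y f r1 r2 x z v \<in> Y \<and> (\<forall>y'\<in>Y. Fpx f r1 r2 x y' z v \<le> Fpx f r1 r2 x (yxzv Y f r1 r2 x z v) z v)"
proof -
  have c: "continuous_on Y (\<lambda>y. - Fpx f r1 r2 x y z v)"
  proof -
    have "continuous_on Y (\<lambda>y. (\<lambda>p. Fpx f r1 r2 (fst p) (snd p) z v) (x, y))"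
      by (rule continuous_on_compose2[OF Fcont]) (auto intro!: continuous_intros)
    then show ?thesis by (auto intro: continuous_on_minus)
  qed
  have m: "0 < r2 - Ly" using mu2 Lpos by simp
  have e: "yxzv Y f r1 r2 x z v = (THE y. y \<in> Y \<and> (\<forall>y'\<in>Y. - Fpx f r1 r2 x y z v \<le> - Fpx f r1 r2 x y' z v))"
    unfolding yxzv_def by simp
  show ?thesis unfolding e
    using argmin_THE[OF Y(3,1,2) c SCnegF[OF x] m] by simp
qed

lemma x_lip:
  assumes y: "y \<in> Y" "y' \<in> Y"
  shows "(r1 - Lx) * norm (xyzv X f r1 r2 y' z' v' - xyzv X f r1 r2 y z v) \<le> Ly * norm (y - y') + r1 * norm (z - z')"
proof -
  define x1 where "x1 = xyzv X f r1 r2 y z v"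
  define x2 where "x2 = xyzv X f r1 r2 y' z' v'"
  have m1: "x1 \<in> X" "\<forall>x'\<in>X. Fpx f r1 r2 x1 y z v \<le> Fpx f r1 r2 x' y z v" using xmin[OF y(1)] by (auto simp: x1_def)
  have m2: "x2 \<in> X" "\<forall>x'\<in>X. Fpx f r1 r2 x2 y' z' v' \<le> Fpx f r1 r2 x' y' z' v'" using xmin[OF y(2)] by (auto simp: x2_def)
  have g1: "Fpx f r1 r2 x2 y z v \<ge> Fpx f r1 r2 x1 y z v + (r1 - Lx) / 2 * (norm (x2 - x1))\<^sup>2"
    using SC_growth[OF SCF[OF y(1)] X(2) m1(1) m2(1) m1(2)] mu1 by simp
  have g2: "Fpx f r1 r2 x1 y' z' v' \<ge> Fpx f r1 r2 x2 y' z' v' + (r1 - Lx) / 2 * (norm (x1 - x2))\<^sup>2"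
    using SC_growth[OF SCF[OF y(2)] X(2) m2(1) m1(1) m2(2)] mu1 by simp
  have sum: "(r1 - Lx) * (norm (x2 - x1))\<^sup>2 \<le> (f x2 y - f x1 y - f x2 y' + f x1 y') +
     r1 / 2 * ((norm (x2 - z))\<^sup>2 - (norm (x1 - z))\<^sup>2 + (norm (x1 - z'))\<^sup>2 - (norm (x2 - z'))\<^sup>2)"
  proof -
    have h: "(r1 - Lx) * (norm (x2 - x1))\<^sup>2 = (r1 - Lx) / 2 * (norm (x2 - x1))\<^sup>2 + (r1 - Lx) / 2 * (norm (x1 - x2))\<^sup>2"
      by (simp add: norm_minus_commute field_simps)
    have "(Fpx f r1 r2 x2 y z v - Fpx f r1 r2 x1 y z v) + (Fpx f r1 r2 x1 y' z' v' - Fpx f r1 r2 x2 y' z' v')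
      = (f x2 y - f x1 y - f x2 y' + f x1 y') +
     r1 / 2 * ((norm (x2 - z))\<^sup>2 - (norm (x1 - z))\<^sup>2 + (norm (x1 - z'))\<^sup>2 - (norm (x2 - z'))\<^sup>2)"
      unfolding Fpx_def by (simp add: field_simps)
    then show ?thesis using g1 g2 h by linarith
  qed
  have b1: "f x2 y - f x1 y - f x2 y' + f x1 y' \<le> Ly * norm (x2 - x1) * norm (y - y')"
    using dd[OF m1(1) m2(1) y] by simp
  have b2: "r1 / 2 * ((norm (x2 - z))\<^sup>2 - (norm (x1 - z))\<^sup>2 + (norm (x1 - z'))\<^sup>2 - (norm (x2 - z'))\<^sup>2)
      \<le> r1 / 2 * (2 * (norm (x2 - x1) * norm (z - z')))"
    using quad4[of x2 z x1 z'] r1 Lpos by (intro mult_left_mono) auto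
  have "(r1 - Lx) * (norm (x2 - x1))\<^sup>2 \<le> norm (x2 - x1) * (Ly * norm (y - y') + r1 * norm (z - z'))"
    using sum b1 b2 by (simp add: algebra_simps)
  from sq_cancel[OF norm_ge_zero this] show ?thesis
    using Lpos r1 by (simp add: x1_def x2_def)
qed

lemma y_lip:
  assumes x: "x \<in> X" "x' \<in> X"
  shows "(r2 - Ly) * norm (yxzv Y f r1 r2 x' z v' - yxzv Y f r1 r2 x z v) \<le> Ly * norm (x - x') + r2 * norm (v - v')"
proof -
  define y1 where "y1 = yxzv Y f r1 r2 x z v"
  define y2 where "y2 = yxzv Y f r1 r2 x' z v'"
  have m1: "y1 \<in> Y" "\<forall>y'\<in>Y. - Fpx f r1 r2 x y1 z v \<le> - Fpx f r1 r2 x y' z v" using ymax[OF x(1)] by (auto simp: y1_def)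
  have m2: "y2 \<in> Y" "\<forall>y'\<in>Y. - Fpx f r1 r2 x' y2 z v' \<le> - Fpx f r1 r2 x' y' z v'" using ymax[OF x(2)] by (auto simp: y2_def)
  have m: "r2 - Ly \<ge> 0" using mu2 Lpos by simp
  have g1: "- Fpx f r1 r2 x y2 z v \<ge> - Fpx f r1 r2 x y1 z v + (r2 - Ly) / 2 * (norm (y2 - y1))\<^sup>2"
    using SC_growth[OF SCnegF[OF x(1)] Y(2) m1(1) m2(1) m1(2) m] by simp
  have g2: "- Fpx f r1 r2 x' y1 z v' \<ge> - Fpx f r1 r2 x' y2 z v' + (r2 - Ly) / 2 * (norm (y1 - y2))\<^sup>2"
    using SC_growth[OF SCnegF[OF x(2)] Y(2) m2(1) m1(1) m2(2) m] by simp
  have sum: "(r2 - Ly) * (norm (y2 - y1))\<^sup>2 \<le> - (f x y2 - f x' y2 - f x y1 + f x' y1) +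
     r2 / 2 * ((norm (y2 - v))\<^sup>2 - (norm (y1 - v))\<^sup>2 + (norm (y1 - v'))\<^sup>2 - (norm (y2 - v'))\<^sup>2)"
  proof -
    have h: "(r2 - Ly) * (norm (y2 - y1))\<^sup>2 = (r2 - Ly) / 2 * (norm (y2 - y1))\<^sup>2 + (r2 - Ly) / 2 * (norm (y1 - y2))\<^sup>2"
      by (simp add: norm_minus_commute field_simps)
    have "(- Fpx f r1 r2 x y2 z v - - Fpx f r1 r2 x y1 z v) + (- Fpx f r1 r2 x' y1 z v' - - Fpx f r1 r2 x' y2 z v')
      = - (f x y2 - f x' y2 - f x y1 + f x' y1) +
     r2 / 2 * ((norm (y2 - v))\<^sup>2 - (norm (y1 - v))\<^sup>2 + (norm (y1 - v'))\<^sup>2 - (norm (y2 - v'))\<^sup>2)"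
      unfolding Fpx_def by (simp add: field_simps)
    then show ?thesis using g1 g2 h by linarith
  qed
  have b1: "- (f x y2 - f x' y2 - f x y1 + f x' y1) \<le> Ly * norm (x - x') * norm (y2 - y1)"
    using dd[OF x(2) x(1) m2(1) m1(1)] by simp
  have b2: "r2 / 2 * ((norm (y2 - v))\<^sup>2 - (norm (y1 - v))\<^sup>2 + (norm (y1 - v'))\<^sup>2 - (norm (y2 - v'))\<^sup>2)
      \<le> r2 / 2 * (2 * (norm (y2 - y1) * norm (v - v')))"
    using quad4[of y2 v y1 v'] mu2 Lpos by (intro mult_left_mono) auto
  have "(r2 - Ly) * (norm (y2 - y1))\<^sup>2 \<le> norm (y2 - y1) * (Ly * norm (x - x') + r2 * norm (v - v'))"
    using sum b1 b2 by (simp add: algebra_simps)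
  from sq_cancel[OF norm_ge_zero this] show ?thesis
    using Lpos mu2 by (simp add: y1_def y2_def)
qed


lemma Fcont_XY: "continuous_on (X \<times> Y) (\<lambda>p. Fpx f r1 r2 (fst p) (snd p) z v)"
  by (rule continuous_on_subset[OF Fcont]) simp

lemma Fcont_YX: "continuous_on (Y \<times> X) (\<lambda>p. Fpx f r1 r2 (snd p) (fst p) z v)"
  by (rule continuous_on_subset[OF Fcont_swap]) simp

lemma Fcont_YX': "continuous_on (Y \<times> X) (\<lambda>p. - Fpx f r1 r2 (snd p) (fst p) z v)"
  by (intro continuous_on_minus Fcont_YX)

lemma h_SC: "SC (r1 - Lx) X (\<lambda>x. hfun Y f r1 r2 x z v)"
  unfolding hfun_def
  by (rule SC_Sup[OF X(2) Y(1) SCF bdd_slice(1)[OF Y(3) Fcont_XY]])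

lemma h_cont: "continuous_on X (\<lambda>x. hfun Y f r1 r2 x z v)"
  unfolding hfun_def by (rule cont_Sup[OF X(3) Y(3) Y(1) Fcont_XY])

lemma xzv_min: "xzv X Y f r1 r2 z v \<in> X \<and> (\<forall>x'\<in>X. hfun Y f r1 r2 (xzv X Y f r1 r2 z v) z v \<le> hfun Y f r1 r2 x' z v)"
  unfolding xzv_def by (rule argmin_THE[OF X(3,1,2) h_cont h_SC mu1])

lemma h_shift: assumes x: "x \<in> X"
  shows "hfun Y f r1 r2 x z v = r1 / 2 * ((norm (x - z))\<^sup>2 - (norm (x - z'))\<^sup>2) + hfun Y f r1 r2 x z' v"
proof -
  have e: "Fpx f r1 r2 x y z v = r1 / 2 * ((norm (x - z))\<^sup>2 - (norm (x - z'))\<^sup>2) + Fpx f r1 r2 x y z' v" for y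
    unfolding Fpx_def by (simp add: field_simps)
  show ?thesis unfolding hfun_def e
    by (rule Sup_add_eq[OF bdd_slice(1)[OF Y(3) Fcont_XY x] Y(1)])
qed

lemma x3_lip: "(r1 - Lx) * norm (xzv X Y f r1 r2 z' v - xzv X Y f r1 r2 z v) \<le> r1 * norm (z - z')"
proof -
  define x1 where "x1 = xzv X Y f r1 r2 z v"
  define x2 where "x2 = xzv X Y f r1 r2 z' v"
  have m1: "x1 \<in> X" "\<forall>x'\<in>X. hfun Y f r1 r2 x1 z v \<le> hfun Y f r1 r2 x' z v" using xzv_min by (auto simp: x1_def)
  have m2: "x2 \<in> X" "\<forall>x'\<in>X. hfun Y f r1 r2 x2 z' v \<le> hfun Y f r1 r2 x' z' v" using xzv_min by (auto simp: x2_def)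
  have g1: "hfun Y f r1 r2 x2 z v \<ge> hfun Y f r1 r2 x1 z v + (r1 - Lx) / 2 * (norm (x2 - x1))\<^sup>2"
    using SC_growth[OF h_SC X(2) m1(1) m2(1) m1(2)] mu1 by simp
  have g2: "hfun Y f r1 r2 x1 z' v \<ge> hfun Y f r1 r2 x2 z' v + (r1 - Lx) / 2 * (norm (x1 - x2))\<^sup>2"
    using SC_growth[OF h_SC X(2) m2(1) m1(1) m2(2)] mu1 by simp
  have s1: "hfun Y f r1 r2 x1 z v = r1 / 2 * ((norm (x1 - z))\<^sup>2 - (norm (x1 - z'))\<^sup>2) + hfun Y f r1 r2 x1 z' v"
    by (rule h_shift[OF m1(1)])
  have s2: "hfun Y f r1 r2 x2 z v = r1 / 2 * ((norm (x2 - z))\<^sup>2 - (norm (x2 - z'))\<^sup>2) + hfun Y f r1 r2 x2 z' v"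
    by (rule h_shift[OF m2(1)])
  have h: "(r1 - Lx) * (norm (x2 - x1))\<^sup>2 = (r1 - Lx) / 2 * (norm (x2 - x1))\<^sup>2 + (r1 - Lx) / 2 * (norm (x1 - x2))\<^sup>2"
    by (simp add: norm_minus_commute field_simps)
  have e: "r1 / 2 * ((norm (x2 - z))\<^sup>2 - (norm (x2 - z'))\<^sup>2) - r1 / 2 * ((norm (x1 - z))\<^sup>2 - (norm (x1 - z'))\<^sup>2)
     = r1 / 2 * ((norm (x2 - z))\<^sup>2 - (norm (x1 - z))\<^sup>2 + (norm (x1 - z'))\<^sup>2 - (norm (x2 - z'))\<^sup>2)"
    by (simp add: field_simps)
  have sum: "(r1 - Lx) * (norm (x2 - x1))\<^sup>2 \<le> r1 / 2 * ((norm (x2 - z))\<^sup>2 - (norm (x1 - z))\<^sup>2 + (norm (x1 - z'))\<^sup>2 - (norm (x2 - z'))\<^sup>2)"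
    using g1 g2 s1 s2 h e by linarith
  have b2: "r1 / 2 * ((norm (x2 - z))\<^sup>2 - (norm (x1 - z))\<^sup>2 + (norm (x1 - z'))\<^sup>2 - (norm (x2 - z'))\<^sup>2)
      \<le> r1 / 2 * (2 * (norm (x2 - x1) * norm (z - z')))"
    using quad4[of x2 z x1 z'] r1 Lpos by (intro mult_left_mono) auto
  have "(r1 - Lx) * (norm (x2 - x1))\<^sup>2 \<le> norm (x2 - x1) * (r1 * norm (z - z'))"
    using sum b2 by (simp add: algebra_simps)
  from sq_cancel[OF norm_ge_zero this] show ?thesis
    using Lpos r1 by (simp add: x1_def x2_def)
qed

lemma d_bdd: assumes y: "y \<in> Y" shows "bdd_below ((\<lambda>x. Fpx f r1 r2 x y z v) ` X)"
  using bdd_slice(2)[OF X(3) Fcont_YX y] by simp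

lemma d_neg: assumes y: "y \<in> Y" shows "- dfun X f r1 r2 y z v = (SUP x\<in>X. - Fpx f r1 r2 x y z v)"
  unfolding dfun_def by (rule uminus_cINF[OF d_bdd[OF y] X(1)])

lemma d_negSC: "SC (r2 - Ly) Y (\<lambda>y. - dfun X f r1 r2 y z v)"
proof -
  have "SC (r2 - Ly) Y (\<lambda>y. SUP x\<in>X. - Fpx f r1 r2 x y z v)"
    by (rule SC_Sup[OF Y(2) X(1) SCnegF bdd_slice(1)[OF X(3) Fcont_YX']])
  then show ?thesis by (rule SC_cong) (use d_neg Y(2) in auto)
qed

lemma d_cont: "continuous_on Y (\<lambda>y. - dfun X f r1 r2 y z v)"
proof -
  have "continuous_on Y (\<lambda>y. SUP x\<in>X. - Fpx f r1 r2 x y z v)"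
    by (rule cont_Sup[OF Y(3) X(3) X(1) Fcont_YX'])
  then show ?thesis by (rule continuous_on_cong[THEN iffD1, rotated 2]) (use d_neg in auto)
qed

lemma yzv_max: "yzv X Y f r1 r2 z v \<in> Y \<and> (\<forall>y'\<in>Y. dfun X f r1 r2 y' z v \<le> dfun X f r1 r2 (yzv X Y f r1 r2 z v) z v)"
proof -
  have m: "0 < r2 - Ly" using mu2 Lpos by simp
  have e: "yzv X Y f r1 r2 z v = (THE y. y \<in> Y \<and> (\<forall>y'\<in>Y. - dfun X f r1 r2 y z v \<le> - dfun X f r1 r2 y' z v))"
    unfolding yzv_def by simp
  show ?thesis unfolding e
    using argmin_THE[OF Y(3,1,2) d_cont d_negSC m] by simp
qed

lemma d_attain: assumes y: "y \<in> Y"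
  shows "dfun X f r1 r2 y z v = Fpx f r1 r2 (xyzv X f r1 r2 y z v) y z v"
  unfolding dfun_def using xmin[OF y] by (intro cInf_eq_minimum) auto

lemma d_le: assumes y: "y \<in> Y" and x: "x \<in> X"
  shows "dfun X f r1 r2 y z v \<le> Fpx f r1 r2 x y z v"
  unfolding dfun_def by (rule cINF_lower[OF d_bdd[OF y] x])


lemma d_main:
  fixes z z' :: 'n and v v' :: 'd
  defines "y1 \<equiv> yzv X Y f r1 r2 z v" and "y2 \<equiv> yzv X Y f r1 r2 z' v'"
  shows "(r2 - Ly) * (norm (y2 - y1))\<^sup>2 \<le>
     r1 * (norm (xyzv X f r1 r2 y1 z' v' - xyzv X f r1 r2 y2 z v) * norm (z - z')) + r2 * (norm (y2 - y1) * norm (v - v'))"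
proof -
  define x12 where "x12 = xyzv X f r1 r2 y1 z' v'"
  define x21 where "x21 = xyzv X f r1 r2 y2 z v"
  have m1: "y1 \<in> Y" "\<forall>y'\<in>Y. - dfun X f r1 r2 y1 z v \<le> - dfun X f r1 r2 y' z v" using yzv_max by (auto simp: y1_def)
  have m2: "y2 \<in> Y" "\<forall>y'\<in>Y. - dfun X f r1 r2 y2 z' v' \<le> - dfun X f r1 r2 y' z' v'" using yzv_max by (auto simp: y2_def)
  have m: "r2 - Ly \<ge> 0" using mu2 Lpos by simp
  have g1: "- dfun X f r1 r2 y2 z v \<ge> - dfun X f r1 r2 y1 z v + (r2 - Ly) / 2 * (norm (y2 - y1))\<^sup>2"
    using SC_growth[OF d_negSC Y(2) m1(1) m2(1) m1(2) m] by simp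
  have g2: "- dfun X f r1 r2 y1 z' v' \<ge> - dfun X f r1 r2 y2 z' v' + (r2 - Ly) / 2 * (norm (y1 - y2))\<^sup>2"
    using SC_growth[OF d_negSC Y(2) m2(1) m1(1) m2(2) m] by simp
  have x12: "x12 \<in> X" using xmin[OF m1(1)] by (simp add: x12_def)
  have x21: "x21 \<in> X" using xmin[OF m2(1)] by (simp add: x21_def)
  have a1: "dfun X f r1 r2 y1 z v \<le> Fpx f r1 r2 x12 y1 z v" by (rule d_le[OF m1(1) x12])
  have a2: "dfun X f r1 r2 y1 z' v' = Fpx f r1 r2 x12 y1 z' v'" unfolding x12_def by (rule d_attain[OF m1(1)])
  have a3: "dfun X f r1 r2 y2 z v = Fpx f r1 r2 x21 y2 z v" unfolding x21_def by (rule d_attain[OF m2(1)])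
  have a4: "dfun X f r1 r2 y2 z' v' \<le> Fpx f r1 r2 x21 y2 z' v'" by (rule d_le[OF m2(1) x21])
  have h: "(r2 - Ly) * (norm (y2 - y1))\<^sup>2 = (r2 - Ly) / 2 * (norm (y2 - y1))\<^sup>2 + (r2 - Ly) / 2 * (norm (y1 - y2))\<^sup>2"
    by (simp add: norm_minus_commute field_simps)
  have e: "Fpx f r1 r2 x12 y1 z v - Fpx f r1 r2 x21 y2 z v + Fpx f r1 r2 x21 y2 z' v' - Fpx f r1 r2 x12 y1 z' v'
     = r1 / 2 * ((norm (x12 - z))\<^sup>2 - (norm (x21 - z))\<^sup>2 + (norm (x21 - z'))\<^sup>2 - (norm (x12 - z'))\<^sup>2)
     + r2 / 2 * ((norm (y2 - v))\<^sup>2 - (norm (y1 - v))\<^sup>2 + (norm (y1 - v'))\<^sup>2 - (norm (y2 - v'))\<^sup>2)"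
    unfolding Fpx_def by (simp add: field_simps)
  have b1: "r1 / 2 * ((norm (x12 - z))\<^sup>2 - (norm (x21 - z))\<^sup>2 + (norm (x21 - z'))\<^sup>2 - (norm (x12 - z'))\<^sup>2)
      \<le> r1 / 2 * (2 * (norm (x12 - x21) * norm (z - z')))"
    using quad4[of x12 z x21 z'] r1 Lpos by (intro mult_left_mono) auto
  have b2: "r2 / 2 * ((norm (y2 - v))\<^sup>2 - (norm (y1 - v))\<^sup>2 + (norm (y1 - v'))\<^sup>2 - (norm (y2 - v'))\<^sup>2)
      \<le> r2 / 2 * (2 * (norm (y2 - y1) * norm (v - v')))"
    using quad4[of y2 v y1 v'] mu2 Lpos by (intro mult_left_mono) auto
  have "(r2 - Ly) * (norm (y2 - y1))\<^sup>2 \<le> r1 / 2 * (2 * (norm (x12 - x21) * norm (z - z'))) + r2 / 2 * (2 * (norm (y2 - y1) * norm (v - v')))"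
    using g1 g2 a1 a2 a3 a4 h e b1 b2 by linarith
  then show ?thesis by (simp add: x12_def x21_def)
qed

end

lemma final_iv:
  fixes t \<delta> Z Ly r1 m1 m2 :: real
  assumes pos: "m1 > 0" "m2 > 0" "r1 > 0" "Ly > 0" "t \<ge> 0" "\<delta> \<ge> 0"
    and h1: "m2 * t\<^sup>2 \<le> r1 * (Z * \<delta>)" and h2: "m1 * Z \<le> Ly * t + r1 * \<delta>"
  shows "t \<le> (r1 * ((Ly + m1) / m1) / m2 + (r1 / m1) / ((Ly + m1) / m1)) * \<delta>"
proof -
  define s1 where "s1 = (Ly + m1) / m1"
  define s2 where "s2 = r1 / m1"
  define A where "A = r1 * s1 / m2"
  define C where "C = s2 / s1"
  have s1p: "s1 > 0" using pos by (simp add: s1_def)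
  have s2p: "s2 > 0" using pos by (simp add: s2_def)
  have Ap: "A \<ge> 0" using pos s1p by (simp add: A_def)
  have Cp: "C \<ge> 0" using s1p s2p by (simp add: C_def)
  have ee: "m1 * (s1 * t + s2 * \<delta>) = (Ly + m1) * t + r1 * \<delta>"
    using pos by (simp add: s1_def s2_def field_simps)
  have "m1 * t \<ge> 0" using pos by simp
  then have "m1 * Z \<le> m1 * (s1 * t + s2 * \<delta>)"
    unfolding ee using h2 by (simp add: algebra_simps)
  then have Z: "Z \<le> s1 * t + s2 * \<delta>" using pos by simp
  have "m2 * t\<^sup>2 \<le> r1 * ((s1 * t + s2 * \<delta>) * \<delta>)"
    using h1 Z pos by (smt (verit) mult_right_mono mult_left_mono)
  then have "t\<^sup>2 \<le> A * t * \<delta> + A * C * \<delta>\<^sup>2"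
    using pos s1p by (simp add: A_def C_def field_simps power2_eq_square)
  show "t \<le> (r1 * ((Ly + m1) / m1) / m2 + (r1 / m1) / ((Ly + m1) / m1)) * \<delta>"
  proof (rule ccontr)
    assume "\<not> ?thesis"
    then have tl: "t > (A + C) * \<delta>" by (simp add: A_def C_def s1_def s2_def)
    have t1: "t - A * \<delta> > C * \<delta>" using tl by (simp add: algebra_simps)
    have t2: "t > 0" using tl Ap Cp pos by (smt (verit) mult_nonneg_nonneg)
    have "t * (t - A * \<delta>) > (A + C) * \<delta> * (C * \<delta>)"
    proof -
      have "C * \<delta> \<ge> 0" using Cp pos by simp
      then show ?thesis using tl t1 t2 by (smt (verit) mult_strict_mono mult_le_cancel_left_pos mult_nonneg_nonneg mult_strict_right_mono)
    qed
    then have "t\<^sup>2 > A * t * \<delta> + A * C * \<delta>\<^sup>2 + C * C * \<delta>\<^sup>2"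
      by (simp add: power2_eq_square algebra_simps)
    moreover have "C * C * \<delta>\<^sup>2 \<ge> 0" by simp
    ultimately show False using \<open>t\<^sup>2 \<le> A * t * \<delta> + A * C * \<delta>\<^sup>2\<close> by linarith
  qed
qed


lemma scale_bound:
  fixes c N K M n :: real
  assumes "c > 0" "c * N \<le> K * n" "K \<le> M" "n \<ge> 0"
  shows "N \<le> M / c * n"
proof -
  have "K * n \<le> M * n" using assms by (intro mult_right_mono) auto
  then have "c * N \<le> M * n" using assms by linarith
  then show ?thesis using assms(1) by (simp add: field_simps)
qed

theorem lemma2:
  fixes X :: "'n::euclidean_space set" and Y :: "'d::euclidean_space set"
    and f :: "'n \<Rightarrow> 'd \<Rightarrow> real"
    and gx :: "'n \<Rightarrow> 'd \<Rightarrow> 'n" and gy :: "'n \<Rightarrow> 'd \<Rightarrow> 'd"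
    and Lx Ly r1 r2 :: real
    and x x' z z' :: 'n and y y' v v' :: 'd
  assumes X: "X \<noteq> {}" "convex X" "compact X"
    and Y: "Y \<noteq> {}" "convex Y" "compact Y"
    and deriv: "\<And>a b. ((\<lambda>p. f (fst p) (snd p)) has_derivative
                   (\<lambda>p. gx a b \<bullet> fst p + gy a b \<bullet> snd p)) (at (a, b))"
    and cont: "continuous_on UNIV (\<lambda>p. gx (fst p) (snd p))"
              "continuous_on UNIV (\<lambda>p. gy (fst p) (snd p))"
    and Lpos: "Lx > 0" "Ly > 0"
    and Lipx: "\<And>a a' b b'. a \<in> X \<Longrightarrow> a' \<in> X \<Longrightarrow> b \<in> Y \<Longrightarrow> b' \<in> Y \<Longrightarrow>
                 norm (gx a b - gx a' b') \<le> Lx * (norm (a - a') + norm (b - b'))"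
    and Lipy: "\<And>a a' b b'. a \<in> X \<Longrightarrow> a' \<in> X \<Longrightarrow> b \<in> Y \<Longrightarrow> b' \<in> Y \<Longrightarrow>
                 norm (gy a b - gy a' b') \<le> Ly * (norm (a - a') + norm (b - b'))"
    and r1: "r1 > Lx"
    and r2: "r2 > (Ly / (r1 - Lx) + 2) * Ly"
    and pts: "x \<in> X" "x' \<in> X" "y \<in> Y" "y' \<in> Y"
  shows
    "let \<sigma>1 = (Ly + r1 - Lx) / (r1 - Lx);
         \<sigma>2 = r1 / (r1 - Lx);
         \<sigma>3 = r1 * \<sigma>1 / (r2 - Ly) + \<sigma>2 / \<sigma>1;
         \<sigma>4 = (Lx + r2 - Ly) / (r2 - Ly);
         \<sigma>5 = r2 / (r2 - Ly)
     in norm (xyzv X f r1 r2 y' z v - xyzv X f r1 r2 y z v) \<le> \<sigma>1 * norm (y' - y)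
      \<and> norm (xyzv X f r1 r2 y z' v - xyzv X f r1 r2 y z v) \<le> \<sigma>2 * norm (z - z')
      \<and> norm (xzv X Y f r1 r2 z' v - xzv X Y f r1 r2 z v) \<le> \<sigma>2 * norm (z - z')
      \<and> norm (yzv X Y f r1 r2 z v - yzv X Y f r1 r2 z' v) \<le> \<sigma>3 * norm (z - z')
      \<and> norm (yxzv Y f r1 r2 x z v - yxzv Y f r1 r2 x' z v) \<le> \<sigma>4 * norm (x - x')
      \<and> norm (yxzv Y f r1 r2 x z v - yxzv Y f r1 r2 x z v') \<le> \<sigma>5 * norm (v - v')
      \<and> norm (yzv X Y f r1 r2 z v - yzv X Y f r1 r2 z v') \<le> \<sigma>5 * norm (v - v')"
proof -
  interpret S: setting X Y f gx gy Lx Ly r1 r2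
    by unfold_locales (use X Y deriv Lpos Lipx Lipy r1 r2 in auto)
  have m1: "r1 - Lx > 0" by (rule S.mu1)
  have m2: "r2 - Ly > Ly" by (rule S.mu2)
  have i: "norm (xyzv X f r1 r2 y' z v - xyzv X f r1 r2 y z v) \<le> (Ly + r1 - Lx) / (r1 - Lx) * norm (y' - y)"
  proof (rule scale_bound[OF m1])
    show "(r1 - Lx) * norm (xyzv X f r1 r2 y' z v - xyzv X f r1 r2 y z v) \<le> Ly * norm (y' - y)"
      using S.x_lip[OF pts(3,4), where z=z and z'=z and v=v and v'=v] by (simp add: norm_minus_commute)
  qed (use m1 in auto)
  have ii: "norm (xyzv X f r1 r2 y z' v - xyzv X f r1 r2 y z v) \<le> r1 / (r1 - Lx) * norm (z - z')"
  proof (rule scale_bound[OF m1])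
    show "(r1 - Lx) * norm (xyzv X f r1 r2 y z' v - xyzv X f r1 r2 y z v) \<le> r1 * norm (z - z')"
      using S.x_lip[OF pts(3,3), where z=z and z'=z' and v=v and v'=v] by simp
  qed auto
  have iii: "norm (xzv X Y f r1 r2 z' v - xzv X Y f r1 r2 z v) \<le> r1 / (r1 - Lx) * norm (z - z')"
    by (rule scale_bound[OF m1 S.x3_lip]) auto
  have iv: "norm (yzv X Y f r1 r2 z v - yzv X Y f r1 r2 z' v)
     \<le> (r1 * ((Ly + r1 - Lx) / (r1 - Lx)) / (r2 - Ly) + (r1 / (r1 - Lx)) / ((Ly + r1 - Lx) / (r1 - Lx))) * norm (z - z')"
  proof -
    define y1 where "y1 = yzv X Y f r1 r2 z v"
    define y2 where "y2 = yzv X Y f r1 r2 z' v"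
    have y12: "y1 \<in> Y" "y2 \<in> Y" using S.yzv_max by (auto simp: y1_def y2_def)
    have h1: "(r2 - Ly) * (norm (y2 - y1))\<^sup>2 \<le>
       r1 * (norm (xyzv X f r1 r2 y1 z' v - xyzv X f r1 r2 y2 z v) * norm (z - z'))"
      using S.d_main[where z=z and v=v and z'=z' and v'=v] by (simp add: y1_def y2_def)
    have h2: "(r1 - Lx) * norm (xyzv X f r1 r2 y1 z' v - xyzv X f r1 r2 y2 z v) \<le> Ly * norm (y2 - y1) + r1 * norm (z - z')"
      using S.x_lip[OF y12(2) y12(1), where z=z and v=v and z'=z' and v'=v] by simp
    have "norm (y2 - y1) \<le> (r1 * ((Ly + (r1 - Lx)) / (r1 - Lx)) / (r2 - Ly) + (r1 / (r1 - Lx)) / ((Ly + (r1 - Lx)) / (r1 - Lx))) * norm (z - z')"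
      by (rule final_iv[OF m1 _ _ _ norm_ge_zero norm_ge_zero h1 h2]) (use m1 m2 Lpos in auto)
    then show ?thesis by (simp add: y1_def y2_def norm_minus_commute add_diff_eq)
  qed
  have v: "norm (yxzv Y f r1 r2 x z v - yxzv Y f r1 r2 x' z v) \<le> (Lx + r2 - Ly) / (r2 - Ly) * norm (x - x')"
  proof (rule scale_bound)
    show "r2 - Ly > 0" using m2 Lpos by simp
    show "(r2 - Ly) * norm (yxzv Y f r1 r2 x z v - yxzv Y f r1 r2 x' z v) \<le> Ly * norm (x - x')"
      using S.y_lip[OF pts(2,1), where z=z and v=v and v'=v] by (simp add: norm_minus_commute)
  qed (use m2 Lpos in auto)
  have vi: "norm (yxzv Y f r1 r2 x z v - yxzv Y f r1 r2 x z v') \<le> r2 / (r2 - Ly) * norm (v - v')"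
  proof (rule scale_bound)
    show "r2 - Ly > 0" using m2 Lpos by simp
    show "(r2 - Ly) * norm (yxzv Y f r1 r2 x z v - yxzv Y f r1 r2 x z v') \<le> r2 * norm (v - v')"
      using S.y_lip[OF pts(1,1), where z=z and v=v' and v'=v] by (simp add: norm_minus_commute)
  qed auto
  have vii: "norm (yzv X Y f r1 r2 z v - yzv X Y f r1 r2 z v') \<le> r2 / (r2 - Ly) * norm (v - v')"
  proof (rule scale_bound)
    show "r2 - Ly > 0" using m2 Lpos by simp
    have "(r2 - Ly) * (norm (yzv X Y f r1 r2 z v' - yzv X Y f r1 r2 z v))\<^sup>2 \<le>
       norm (yzv X Y f r1 r2 z v' - yzv X Y f r1 r2 z v) * (r2 * norm (v - v'))"
      using S.d_main[where z=z and v=v and z'=z and v'=v'] by (simp add: mult_ac)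
    from sq_cancel[OF norm_ge_zero this] show "(r2 - Ly) * norm (yzv X Y f r1 r2 z v - yzv X Y f r1 r2 z v') \<le> r2 * norm (v - v')"
      using m2 Lpos by (simp add: norm_minus_commute)
  qed auto
  show ?thesis unfolding Let_def using i ii iii iv v vi vii by blast
qed

end
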